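(* Let $G\in\mathcal{G}(\widehat{C}_6,\widehat{C}_7)$ and $x\in V(G)$, and suppose that the set $S^*$ is independent. Then $x$ is extendable in $H_x$ if and only if $x$ is extendable in $H^*_x$.
   Context: All graphs are finite, simple and undirected. $\mathcal{G}(\widehat{C}_6,\widehat{C}_7)$ is the family of graphs with no subgraph (not necessarily induced) isomorphic to $C_6$ or $C_7$. For a vertex set $S$, $N_i(S)$ is the set of vertices at distance exactly $i$ from $S$, $N_i[S]$ those at distance at most $i$, $N(S)=N_1(S)$, $N[S]=N_1[S]$, $N(v)=N(\{v\})$ etc. A vertex $v$ of a graph $H$ is extendable in $H$ if there is no independent set $S\subseteq N_2(v)$ (distances computed in $H$) with $N(v)\subseteq N[S]$ (in $H$). In $G$: $A^*$ is the set of connected components $A$ of $G[N_2(x)]$ for which there exists $a\in V(A)$ with $N(x)\cap N(a)=N(x)\cap N(V(A))$; $V(A^* )$ is the union of their vertex sets; $D=N(x)\setminus N(V(A^* ))$; $H_x=G[N_2[x]\setminus N[V(A^* )]]$; $S^*=\{v\in N_2(x)\setminus V(A^* ) : |N(v)\cap D|\ge 2\}$ (a subset of $V(H_x)$); and $H^*_x=G[V(H_x)\setminus N[S^*]]$ (neighbourhoods in $G$). *)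

theory Defs
  imports Main
begin

definition graph :: "'a set \<Rightarrow> ('a \<Rightarrow> 'a \<Rightarrow> bool) \<Rightarrow> bool" where
  "graph V E \<longleftrightarrow> finite V \<and> (\<forall>u v. E u v \<longrightarrow> u \<in> V \<and> v \<in> V)
      \<and> (\<forall>u v. E u v \<longrightarrow> E v u) \<and> (\<forall>v. \<not> E v v)"

definition has_cycle :: "'a set \<Rightarrow> ('a \<Rightarrow> 'a \<Rightarrow> bool) \<Rightarrow> nat \<Rightarrow> bool" where
  "has_cycle V E k \<longleftrightarrow> (\<exists>f :: nat \<Rightarrow> 'a. inj_on f {..<k} \<and> f ` {..<k} \<subseteq> V
      \<and> (\<forall>i<k. E (f i) (f ((i + 1) mod k))))"

definition no_C6_C7 :: "'a set \<Rightarrow> ('a \<Rightarrow> 'a \<Rightarrow> bool) \<Rightarrow> bool" where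
  "no_C6_C7 V E \<longleftrightarrow> graph V E \<and> \<not> has_cycle V E 6 \<and> \<not> has_cycle V E 7"

definition walk :: "'a set \<Rightarrow> ('a \<Rightarrow> 'a \<Rightarrow> bool) \<Rightarrow> 'a list \<Rightarrow> bool" where
  "walk W E p \<longleftrightarrow> p \<noteq> [] \<and> set p \<subseteq> W \<and> successively E p"

text \<open>N_i[S] in G[W]: vertices of W at distance at most i from S (distance in G[W]).\<close>
definition closed_nbhd :: "'a set \<Rightarrow> ('a \<Rightarrow> 'a \<Rightarrow> bool) \<Rightarrow> 'a set \<Rightarrow> nat \<Rightarrow> 'a set" where
  "closed_nbhd W E S i = {v. \<exists>p. walk W E p \<and> hd p \<in> S \<and> last p = v \<and> length p \<le> Suc i}"

definition nbhd :: "'a set \<Rightarrow> ('a \<Rightarrow> 'a \<Rightarrow> bool) \<Rightarrow> 'a set \<Rightarrow> nat \<Rightarrow> 'a set" where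
  "nbhd W E S i = (if i = 0 then closed_nbhd W E S 0
                   else closed_nbhd W E S i - closed_nbhd W E S (i - 1))"

definition independent :: "('a \<Rightarrow> 'a \<Rightarrow> bool) \<Rightarrow> 'a set \<Rightarrow> bool" where
  "independent E S \<longleftrightarrow> (\<forall>u\<in>S. \<forall>v\<in>S. \<not> E u v)"

definition extendable :: "'a set \<Rightarrow> ('a \<Rightarrow> 'a \<Rightarrow> bool) \<Rightarrow> 'a \<Rightarrow> bool" where
  "extendable W E v \<longleftrightarrow> \<not> (\<exists>S. S \<subseteq> nbhd W E {v} 2 \<and> independent E S
        \<and> nbhd W E {v} 1 \<subseteq> closed_nbhd W E S 1)"

definition components :: "'a set \<Rightarrow> ('a \<Rightarrow> 'a \<Rightarrow> bool) \<Rightarrow> 'a set set" where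
  "components W E = {{b. \<exists>p. walk W E p \<and> hd p = a \<and> last p = b} | a. a \<in> W}"

definition Astar :: "'a set \<Rightarrow> ('a \<Rightarrow> 'a \<Rightarrow> bool) \<Rightarrow> 'a \<Rightarrow> 'a set set" where
  "Astar V E x = {A \<in> components (nbhd V E {x} 2) E.
      \<exists>a\<in>A. nbhd V E {x} 1 \<inter> nbhd V E {a} 1 = nbhd V E {x} 1 \<inter> nbhd V E A 1}"

definition VAstar :: "'a set \<Rightarrow> ('a \<Rightarrow> 'a \<Rightarrow> bool) \<Rightarrow> 'a \<Rightarrow> 'a set" where
  "VAstar V E x = \<Union> (Astar V E x)"

definition Dset :: "'a set \<Rightarrow> ('a \<Rightarrow> 'a \<Rightarrow> bool) \<Rightarrow> 'a \<Rightarrow> 'a set" where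
  "Dset V E x = nbhd V E {x} 1 - nbhd V E (VAstar V E x) 1"

definition Hx :: "'a set \<Rightarrow> ('a \<Rightarrow> 'a \<Rightarrow> bool) \<Rightarrow> 'a \<Rightarrow> 'a set" where
  "Hx V E x = closed_nbhd V E {x} 2 - closed_nbhd V E (VAstar V E x) 1"

definition Sstar :: "'a set \<Rightarrow> ('a \<Rightarrow> 'a \<Rightarrow> bool) \<Rightarrow> 'a \<Rightarrow> 'a set" where
  "Sstar V E x = {v \<in> nbhd V E {x} 2 - VAstar V E x.
      card (nbhd V E {v} 1 \<inter> Dset V E x) \<ge> 2}"

definition Hstarx :: "'a set \<Rightarrow> ('a \<Rightarrow> 'a \<Rightarrow> bool) \<Rightarrow> 'a \<Rightarrow> 'a set" where
  "Hstarx V E x = Hx V E x - closed_nbhd V E (Sstar V E x) 1"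

end

theory Submission
  imports Defs
begin


lemma walk_single: "walk W E [a] \<longleftrightarrow> a \<in> W" by (simp add: walk_def)
lemma walk_two: "walk W E [a,b] \<longleftrightarrow> a \<in> W \<and> b \<in> W \<and> E a b" by (auto simp: walk_def)
lemma walk_three: "walk W E [a,b,c] \<longleftrightarrow> a \<in> W \<and> b \<in> W \<and> c \<in> W \<and> E a b \<and> E b c" by (auto simp: walk_def)

lemma closed1_eq: "closed_nbhd W E S 1 = {v. v \<in> W \<and> (v \<in> S \<or> (\<exists>s. s \<in> S \<and> s \<in> W \<and> E s v))}"
proof (intro set_eqI iffI)
  fix v assume "v \<in> closed_nbhd W E S 1"
  then obtain p where p: "walk W E p" "hd p \<in> S" "last p = v" "length p \<le> 2"
    by (auto simp: closed_nbhd_def)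
  then show "v \<in> {v. v \<in> W \<and> (v \<in> S \<or> (\<exists>s. s \<in> S \<and> s \<in> W \<and> E s v))}"
  proof (cases p)
    case Nil then show ?thesis using p by (simp add: walk_def)
  next
    case (Cons a q) then show ?thesis using p
      by (cases q) (auto simp: walk_def)
  qed
next
  fix v assume "v \<in> {v. v \<in> W \<and> (v \<in> S \<or> (\<exists>s. s \<in> S \<and> s \<in> W \<and> E s v))}"
  show "v \<in> closed_nbhd W E S 1"
  proof -
    { assume "v \<in> S" "v \<in> W" hence ?thesis unfolding closed_nbhd_def
      by (intro CollectI exI[of _ "[v]"]) (auto simp: walk_single) }
    moreover
    { fix s assume "s \<in> S" "s \<in> W" "E s v" "v \<in> W" hence ?thesis unfolding closed_nbhd_def
      by (intro CollectI exI[of _ "[s,v]"]) (auto simp: walk_two) }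
    ultimately show ?thesis using \<open>v \<in> {v. _}\<close> by blast
  qed
qed

lemma closed2_eq: "closed_nbhd W E S 2 = {v. v \<in> W \<and> (v \<in> S \<or> (\<exists>s. s \<in> S \<and> s \<in> W \<and> E s v)
   \<or> (\<exists>s u. s \<in> S \<and> s \<in> W \<and> u \<in> W \<and> E s u \<and> E u v))}"
proof (intro set_eqI iffI)
  fix v assume "v \<in> closed_nbhd W E S 2"
  then obtain p where p: "walk W E p" "hd p \<in> S" "last p = v" "length p \<le> 3"
    by (auto simp: closed_nbhd_def)
  then show "v \<in> {v. v \<in> W \<and> (v \<in> S \<or> (\<exists>s. s \<in> S \<and> s \<in> W \<and> E s v)
   \<or> (\<exists>s u. s \<in> S \<and> s \<in> W \<and> u \<in> W \<and> E s u \<and> E u v))}"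
  proof (cases p)
    case Nil then show ?thesis using p by (simp add: walk_def)
  next
    case (Cons a q) then show ?thesis using p
      apply (cases q) apply (auto simp: walk_def)[1]
      subgoal for b r by (cases r) (auto simp: walk_def)
      done
  qed
next
  fix v assume v: "v \<in> {v. v \<in> W \<and> (v \<in> S \<or> (\<exists>s. s \<in> S \<and> s \<in> W \<and> E s v)
   \<or> (\<exists>s u. s \<in> S \<and> s \<in> W \<and> u \<in> W \<and> E s u \<and> E u v))}"
  show "v \<in> closed_nbhd W E S 2"
  proof -
    { assume "v \<in> S" "v \<in> W"
      hence ?thesis unfolding closed_nbhd_def
        by (intro CollectI exI[of _ "[v]"]) (auto simp: walk_single) }
    moreover
    { fix s assume "s \<in> S" "s \<in> W" "E s v" "v \<in> W"
      hence ?thesis unfolding closed_nbhd_def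
        by (intro CollectI exI[of _ "[s,v]"]) (auto simp: walk_two) }
    moreover
    { fix s u assume "s \<in> S" "s \<in> W" "u \<in> W" "E s u" "E u v" "v \<in> W"
      hence ?thesis unfolding closed_nbhd_def
        by (intro CollectI exI[of _ "[s,u,v]"]) (auto simp: walk_three) }
    ultimately show ?thesis using v by blast
  qed
qed

lemma nbhd1_eq: "nbhd W E S 1 = closed_nbhd W E S 1 - closed_nbhd W E S 0"
  by (simp add: nbhd_def)
lemma nbhd2_eq: "nbhd W E S 2 = closed_nbhd W E S 2 - closed_nbhd W E S 1"
  by (simp add: nbhd_def)

lemma closed0_eq: "closed_nbhd W E S 0 = S \<inter> W"
proof (intro set_eqI iffI)
  fix v assume "v \<in> closed_nbhd W E S 0"
  then obtain p where p: "walk W E p" "hd p \<in> S" "last p = v" "length p \<le> 1"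
    by (auto simp: closed_nbhd_def)
  then show "v \<in> S \<inter> W" by (cases p) (auto simp: walk_def)
next
  fix v assume "v \<in> S \<inter> W" then show "v \<in> closed_nbhd W E S 0" unfolding closed_nbhd_def
    by (intro CollectI exI[of _ "[v]"]) (auto simp: walk_single)
qed

lemma nbhd_x1: assumes irr: "\<And>v. \<not> E v v" and "x \<in> W"
  shows "nbhd W E {x} 1 = {v. v \<in> W \<and> E x v}"
  using assms unfolding nbhd1_eq closed1_eq closed0_eq by auto

lemma nbhd_x2: assumes irr: "\<And>v. \<not> E v v" and "x \<in> W"
  shows "nbhd W E {x} 2 = {v. v \<in> W \<and> v \<noteq> x \<and> \<not> E x v \<and> (\<exists>u. u \<in> W \<and> E x u \<and> E u v)}"
  using assms unfolding nbhd2_eq closed1_eq closed2_eq by auto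

lemma nbhdS1: "nbhd W E S 1 = {v. v \<in> W \<and> v \<notin> S \<and> (\<exists>s. s \<in> S \<and> s \<in> W \<and> E s v)}"
  unfolding nbhd1_eq closed1_eq closed0_eq by auto

lemma length_list6: "length [a,b,c,d,e,f] = 6" by simp
lemma length_list7: "length [a,b,c,d,e,f,g] = 7" by simp

lemma c6: assumes "distinct [a,b,c,d,e,f]" "{a,b,c,d,e,f} \<subseteq> V"
  "E a b" "E b c" "E c d" "E d e" "E e f" "E f a" shows "has_cycle V E 6"
  unfolding has_cycle_def
proof (intro exI[of _ "(!) [a,b,c,d,e,f]"] conjI allI impI)
  show "inj_on ((!) [a,b,c,d,e,f]) {..<6}" using assms(1) unfolding inj_on_def distinct_conv_nth
    by (metis lessThan_iff length_list6)
  show "(!) [a,b,c,d,e,f] ` {..<6} \<subseteq> V"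
  proof
    fix y assume "y \<in> (!) [a,b,c,d,e,f] ` {..<6}"
    then obtain i where "i < 6" "y = [a,b,c,d,e,f] ! i" by auto
    moreover hence "i = 0 \<or> i = 1 \<or> i = 2 \<or> i = 3 \<or> i = 4 \<or> i = 5" by auto
    ultimately show "y \<in> V" using assms(2) by auto
  qed
  fix i :: nat assume "i < 6"
  hence "i = 0 \<or> i = 1 \<or> i = 2 \<or> i = 3 \<or> i = 4 \<or> i = 5" by auto
  thus "E ([a,b,c,d,e,f] ! i) ([a,b,c,d,e,f] ! ((i + 1) mod 6))" using assms by auto
qed

lemma c7: assumes "distinct [a,b,c,d,e,f,g]" "{a,b,c,d,e,f,g} \<subseteq> V"
  "E a b" "E b c" "E c d" "E d e" "E e f" "E f g" "E g a" shows "has_cycle V E 7"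
  unfolding has_cycle_def
proof (intro exI[of _ "(!) [a,b,c,d,e,f,g]"] conjI allI impI)
  show "inj_on ((!) [a,b,c,d,e,f,g]) {..<7}" using assms(1) unfolding inj_on_def distinct_conv_nth
    by (metis lessThan_iff length_list7)
  show "(!) [a,b,c,d,e,f,g] ` {..<7} \<subseteq> V"
  proof
    fix y assume "y \<in> (!) [a,b,c,d,e,f,g] ` {..<7}"
    then obtain i where "i < 7" "y = [a,b,c,d,e,f,g] ! i" by auto
    moreover hence "i = 0 \<or> i = 1 \<or> i = 2 \<or> i = 3 \<or> i = 4 \<or> i = 5 \<or> i = 6" by auto
    ultimately show "y \<in> V" using assms(2) by auto
  qed
  fix i :: nat assume "i < 7"
  hence "i = 0 \<or> i = 1 \<or> i = 2 \<or> i = 3 \<or> i = 4 \<or> i = 5 \<or> i = 6" by auto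
  thus "E ([a,b,c,d,e,f,g] ! i) ([a,b,c,d,e,f,g] ! ((i + 1) mod 7))" using assms by auto
qed



locale G67 =
  fixes V :: "'a set" and E :: "'a \<Rightarrow> 'a \<Rightarrow> bool" and x :: 'a
  assumes gr: "graph V E" and no6: "\<not> has_cycle V E 6" and no7: "\<not> has_cycle V E 7"
    and xV: "x \<in> V"
begin

lemma sym: "E u v \<Longrightarrow> E v u" using gr by (auto simp: graph_def)
lemma irr[simp]: "\<not> E v v" using gr by (auto simp: graph_def)
lemma inV1: "E u v \<Longrightarrow> u \<in> V" using gr by (auto simp: graph_def)
lemma inV2: "E u v \<Longrightarrow> v \<in> V" using gr by (auto simp: graph_def)

abbreviation "N2s \<equiv> nbhd V E {x} 2"
abbreviation "VA \<equiv> VAstar V E x"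
abbreviation "D \<equiv> Dset V E x"

lemma N1_eq: "nbhd V E {x} 1 = {v. E x v}"
  using nbhd_x1[of E x V] xV inV2 by auto

lemma N2_mem: "v \<in> N2s \<longleftrightarrow> v \<noteq> x \<and> \<not> E x v \<and> (\<exists>u. E x u \<and> E u v)"
  using nbhd_x2[of E x V] xV inV2 by auto

lemma nv1: "v \<in> V \<Longrightarrow> nbhd V E {v} 1 = {w. E v w}"
  using nbhd_x1[of E v V] inV2 by auto

lemma VA_sub: "VA \<subseteq> N2s"
  unfolding VAstar_def Astar_def components_def walk_def
  by auto

lemma VA_closed:
  assumes "a \<in> VA" "v \<in> N2s" "E a v" shows "v \<in> VA"
proof -
  from assms(1) obtain A where A: "A \<in> Astar V E x" "a \<in> A" unfolding VAstar_def by auto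
  then obtain a0 where A0: "A = {b. \<exists>p. walk N2s E p \<and> hd p = a0 \<and> last p = b}"
    unfolding Astar_def components_def by auto
  with A obtain p where p: "walk N2s E p" "hd p = a0" "last p = a" by auto
  have "walk N2s E (p @ [v])" using p assms(2,3)
    by (auto simp: walk_def successively_append_iff)
  moreover have "hd (p @ [v]) = a0" "last (p @ [v]) = v" using p by (auto simp: walk_def)
  ultimately have "v \<in> A" using A0 by blast
  thus ?thesis using A unfolding VAstar_def by auto
qed

lemma x_notin_N2: "x \<notin> N2s" using N2_mem by auto

lemma VA_nbr: "a \<in> VA \<Longrightarrow> E a v \<Longrightarrow> v \<in> N2s \<Longrightarrow> v \<in> VA" using VA_closed by blast

lemma D_mem: "d \<in> D \<longleftrightarrow> E x d \<and> (\<forall>a\<in>VA. \<not> E a d)"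
proof -
  have "d \<notin> VA" if "E x d" using VA_sub N2_mem that by auto
  thus ?thesis unfolding Dset_def N1_eq nbhdS1 using inV1 inV2 by auto (use inV1 in blast)
qed

lemma Hx_mem: "v \<in> Hx V E x \<longleftrightarrow> v \<in> V \<and> (v = x \<or> E x v \<or> (\<exists>u. E x u \<and> E u v))
   \<and> v \<notin> VA \<and> (\<forall>a\<in>VA. \<not> E a v)"
  unfolding Hx_def closed2_eq closed1_eq using xV inV1 inV2 by auto (use inV1 in blast)+

lemma Ss_mem: "t \<in> Sstar V E x \<longleftrightarrow> t \<in> N2s \<and> t \<notin> VA \<and> 2 \<le> card ({w. E t w} \<inter> D)"
proof -
  have "t \<in> N2s \<Longrightarrow> t \<in> V" using N2_mem inV2 by blast
  thus ?thesis unfolding Sstar_def using nv1 by auto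
qed

lemma Hs_mem: "v \<in> Hstarx V E x \<longleftrightarrow> v \<in> Hx V E x \<and> v \<notin> Sstar V E x \<and> (\<forall>t\<in>Sstar V E x. \<not> E t v)"
  unfolding Hstarx_def closed1_eq using inV1 by (auto simp: Hx_mem)

end


context G67 begin

lemma cyc6: "distinct [a,b,c,d,e,f] \<Longrightarrow> E a b \<Longrightarrow> E b c \<Longrightarrow> E c d \<Longrightarrow> E d e \<Longrightarrow> E e f \<Longrightarrow> E f a \<Longrightarrow> False"
  using c6[of a b c d e f V E] no6 inV1 by blast
lemma cyc7: "distinct [a,b,c,d,e,f,g] \<Longrightarrow> E a b \<Longrightarrow> E b c \<Longrightarrow> E c d \<Longrightarrow> E d e \<Longrightarrow> E e f \<Longrightarrow> E f g \<Longrightarrow> E g a \<Longrightarrow> False"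
  using c7[of a b c d e f g V E] no7 inV1 by blast

lemma N2D: "v \<in> N2s \<Longrightarrow> v \<noteq> x \<and> \<not> E x v" using N2_mem by blast

lemma core:
  assumes t: "t \<in> N2s" and d: "E x d1" "E x d2" "d1 \<noteq> d2" "E t d1" "E t d2"
    and s1: "s1 \<in> N2s" "E s1 d1" "s1 \<noteq> t" "\<not> E s1 t" "\<not> E s1 d2" "s1 \<notin> VA"
  shows "\<exists>y \<in> N2s. E s1 y \<and> E y d2"
proof -
  have tx: "t \<noteq> x" "\<not> E x t" using N2D[OF t] by auto
  have s1x: "s1 \<noteq> x" "\<not> E x s1" using N2D[OF s1(1)] by auto
  have Q0: "e = d1" if "E x e" "E s1 e" for e
  proof (rule ccontr)
    assume "e \<noteq> d1"
    moreover have "e \<noteq> d2" using that s1 by auto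
    ultimately show False
    proof (intro cyc6[of x e s1 d1 t d2])
      show "distinct [x, e, s1, d1, t, d2]" using \<open>e \<noteq> d1\<close> \<open>e \<noteq> d2\<close> that d s1 tx s1x by auto
    qed (use that d s1 sym in auto)
  qed
  define C1 where "C1 = {b. \<exists>p. walk N2s E p \<and> hd p = s1 \<and> last p = b}"
  have s1C: "s1 \<in> C1" unfolding C1_def by (intro CollectI exI[of _ "[s1]"]) (simp add: walk_def s1)
  have C1N2: "C1 \<subseteq> N2s" unfolding C1_def walk_def by auto
  have C1comp: "C1 \<in> components N2s E" unfolding components_def C1_def using s1(1) by blast
  have "C1 \<notin> Astar V E x" using s1C s1(6) unfolding VAstar_def by auto
  hence neq: "nbhd V E {x} 1 \<inter> nbhd V E {s1} 1 \<noteq> nbhd V E {x} 1 \<inter> nbhd V E C1 1"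
    using C1comp s1C unfolding Astar_def by blast
  have "\<exists>c e. c \<in> C1 \<and> E c e \<and> E x e \<and> e \<noteq> d1"
  proof (rule ccontr)
    assume nce: "\<not> (\<exists>c e. c \<in> C1 \<and> E c e \<and> E x e \<and> e \<noteq> d1)"
    have s1V: "s1 \<in> V" using inV1 s1 by blast
    have "nbhd V E {x} 1 \<inter> nbhd V E {s1} 1 = {d1}"
      unfolding N1_eq nv1[OF s1V] using Q0 s1(2) d(1) by blast
    moreover have "nbhd V E {x} 1 \<inter> nbhd V E C1 1 = {d1}"
    proof -
      have "d1 \<notin> C1" using C1N2 N2D d by auto
      have "{v. E x v} \<inter> {v. v \<in> V \<and> v \<notin> C1 \<and> (\<exists>s. s \<in> C1 \<and> s \<in> V \<and> E s v)} = {d1}"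
      proof (intro equalityI subsetI)
        fix v assume "v \<in> {v. E x v} \<inter> {v. v \<in> V \<and> v \<notin> C1 \<and> (\<exists>s. s \<in> C1 \<and> s \<in> V \<and> E s v)}"
        thus "v \<in> {d1}" using nce by blast
      next
        fix v assume "v \<in> {d1}"
        thus "v \<in> {v. E x v} \<inter> {v. v \<in> V \<and> v \<notin> C1 \<and> (\<exists>s. s \<in> C1 \<and> s \<in> V \<and> E s v)}"
          using \<open>d1 \<notin> C1\<close> s1C s1V s1(2) d(1) inV2 by blast
      qed
      thus ?thesis by (subst N1_eq, subst nbhdS1)
    qed
    ultimately show False using neq by simp
  qed
  then obtain c e where ce: "c \<in> C1" "E c e" "E x e" "e \<noteq> d1" by blast
  from ce(1) obtain p where p: "walk N2s E p" "hd p = s1" "last p = c" unfolding C1_def by auto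
  have pne: "p \<noteq> []" using p walk_def by auto
  have pN2: "\<And>i. i < length p \<Longrightarrow> p ! i \<in> N2s" using p(1) nth_mem unfolding walk_def by blast
  have pE: "\<And>i. Suc i < length p \<Longrightarrow> E (p ! i) (p ! Suc i)" using p(1) successively_nth unfolding walk_def by blast
  define Q where "Q v = (\<forall>e. E x e \<and> E v e \<longrightarrow> e = d1)" for v
  have Qd1: "E v d1" if "v \<in> N2s" "Q v" for v
    using that N2_mem Q_def sym by metis
  define j where "j = (LEAST j. j < length p \<and> \<not> Q (p ! j))"
  have pl: "p ! (length p - 1) = c" using last_conv_nth[OF pne] p(3) by simp
  have ex: "length p - 1 < length p \<and> \<not> Q (p ! (length p - 1))"
    unfolding pl using pne ce unfolding Q_def by auto
  have ex2: "\<exists>j. j < length p \<and> \<not> Q (p ! j)" using ex by blast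
  have j: "j < length p" "\<not> Q (p ! j)" using LeastI_ex[OF ex2] j_def by auto
  have Qlt: "Q (p ! i)" if "i < j" for i
  proof -
    have "\<not> (i < length p \<and> \<not> Q (p ! i))"
      using not_less_Least[of i "\<lambda>j. j < length p \<and> \<not> Q (p ! j)"] that unfolding j_def by blast
    thus ?thesis using that j(1) by simp
  qed
  have Qs1: "Q s1" using Q0 unfolding Q_def by blast
  have p0: "p ! 0 = s1" using hd_conv_nth[OF pne] p(2) by simp
  have j0: "j \<noteq> 0"
  proof
    assume "j = 0" thus False using j(2) Qs1 p0 by simp
  qed
  obtain e' where e': "E x e'" "E (p ! j) e'" "e' \<noteq> d1" using j(2) Q_def by auto
  show ?thesis
  proof (cases "j = 1")
    case False
    define k where "k = j - 2"
    have k: "j = Suc (Suc k)" using j0 False unfolding k_def by arith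
    have q0: "Q (p ! k)" "Q (p ! Suc k)" using Qlt k by auto
    have n0: "p ! k \<in> N2s" "p ! Suc k \<in> N2s" "p ! j \<in> N2s" using pN2 j(1) k by auto
    have E1: "E (p ! k) (p ! Suc k)" "E (p ! Suc k) (p ! j)" using pE j(1) k by auto
    have "p ! k \<noteq> p ! j" using q0 j(2) by auto
    moreover have "E (p ! k) d1" "E (p ! Suc k) d1" using Qd1 q0 n0 by auto
    ultimately have False
    proof (intro cyc6[of x d1 "p ! k" "p ! Suc k" "p ! j" e'])
      show "distinct [x, d1, p ! k, p ! Suc k, p ! j, e']"
        using \<open>p ! k \<noteq> p ! j\<close> E1 e' d n0 N2D by (auto dest: sym)
    qed (use e' E1 d \<open>E (p ! k) d1\<close> sym in auto)
    thus ?thesis ..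
  next
    case True
    have y: "p ! 1 \<in> N2s" "E s1 (p ! 1)" using pN2 pE[of 0] j(1) True p(2) hd_conv_nth[OF pne] by auto
    have "e' = d2"
    proof (rule ccontr)
      assume "e' \<noteq> d2"
      moreover have "p ! 1 \<noteq> t" using y s1 by auto
      ultimately show False
      proof (intro cyc7[of x e' "p ! 1" s1 d1 t d2])
        show "distinct [x, e', p ! 1, s1, d1, t, d2]"
          using \<open>e' \<noteq> d2\<close> \<open>p ! 1 \<noteq> t\<close> e' True y s1 d N2D t by (auto dest: sym)
      qed (use e' True y s1 d sym in auto)
    qed
    thus ?thesis using y e' True by auto
  qed
qed

end


lemma card_ge2: assumes "2 \<le> card A" shows "\<exists>a\<in>A. \<exists>b\<in>A. a \<noteq> b"
proof -
  have fin: "finite A" using assms card.infinite by force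
  show ?thesis
  proof (rule ccontr)
    assume "\<not> ?thesis"
    hence "card A \<le> Suc 0" using card_le_Suc0_iff_eq[OF fin] by blast
    thus False using assms by simp
  qed
qed

context G67 begin

lemma MC:
  assumes S: "S \<subseteq> N2s" "independent E S"
    and cover: "\<And>d'. d' \<in> D \<Longrightarrow> \<exists>s'\<in>S. s' \<in> Hx V E x \<and> E s' d'"
    and s: "s \<in> S" "E x d" "E s d"
    and t: "t \<in> N2s" "E t d1" "E t d2" "d1 \<in> D" "d2 \<in> D" "d1 \<noteq> d2" "\<not> E t d" "E s t"
  shows False
proof -
  have ind: "\<And>u v. u \<in> S \<Longrightarrow> v \<in> S \<Longrightarrow> \<not> E u v" using S(2) unfolding independent_def by blast
  have dx: "E x d1" "E x d2" using t D_mem by auto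
  have sN: "s \<in> N2s" using S s by auto
  have sx: "s \<noteq> x" "\<not> E x s" using N2D[OF sN] by auto
  have tx: "t \<noteq> x" "\<not> E x t" using N2D[OF t(1)] by auto
  have dd: "d \<noteq> d1" "d \<noteq> d2" using t by auto
  have st: "s \<noteq> t" using t by auto
  have sd1: "\<not> E s d1"
  proof
    assume a: "E s d1"
    show False
    proof (intro cyc6[of x d s d1 t d2])
      show "distinct [x, d, s, d1, t, d2]" using dd dx s t sx tx st by auto
    qed (use a dx s t sym in auto)
  qed
  have sd2: "\<not> E s d2"
  proof
    assume a: "E s d2"
    show False
    proof (intro cyc6[of x d s d2 t d1])
      show "distinct [x, d, s, d2, t, d1]" using dd dx s t sx tx st by auto
    qed (use a dx s t sym in auto)
  qed
  obtain s1 where s1: "s1 \<in> S" "s1 \<in> Hx V E x" "E s1 d1" using cover t by blast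
  obtain s2 where s2: "s2 \<in> S" "s2 \<in> Hx V E x" "E s2 d2" using cover t by blast
  have s1N: "s1 \<in> N2s" "s1 \<notin> VA" using s1 S Hx_mem by auto
  have s2N: "s2 \<in> N2s" "s2 \<notin> VA" using s2 S Hx_mem by auto
  have s1x: "s1 \<noteq> x" "\<not> E x s1" using N2D[OF s1N(1)] by auto
  have s2x: "s2 \<noteq> x" "\<not> E x s2" using N2D[OF s2N(1)] by auto
  have s1t: "s1 \<noteq> t" using ind s1 s t by auto
  have s2t: "s2 \<noteq> t" using ind s2 s t by auto
  have s1s: "s1 \<noteq> s" using sd1 s1 by auto
  have s2s: "s2 \<noteq> s" using sd2 s2 by auto
  have s1tE: "\<not> E s1 t"
  proof
    assume a: "E s1 t"
    show False
    proof (intro cyc6[of x d s t s1 d1])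
      show "distinct [x, d, s, t, s1, d1]" using dd dx s t sx tx st s1x s1t s1s by auto
    qed (use a dx s t s1 sym in auto)
  qed
  have s2tE: "\<not> E s2 t"
  proof
    assume a: "E s2 t"
    show False
    proof (intro cyc6[of x d s t s2 d2])
      show "distinct [x, d, s, t, s2, d2]" using dd dx s t sx tx st s2x s2t s2s by auto
    qed (use a dx s t s2 sym in auto)
  qed
  have s1d2: "\<not> E s1 d2"
  proof
    assume a: "E s1 d2"
    show False
    proof (intro cyc7[of x d s t d2 s1 d1])
      show "distinct [x, d, s, t, d2, s1, d1]" using dd dx s t sx tx st s1x s1t s1s by auto
    qed (use a dx s t s1 sym in auto)
  qed
  have s2d1: "\<not> E s2 d1"
  proof
    assume a: "E s2 d1"
    show False
    proof (intro cyc7[of x d s t d1 s2 d2])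
      show "distinct [x, d, s, t, d1, s2, d2]" using dd dx s t sx tx st s2x s2t s2s by auto
    qed (use a dx s t s2 sym in auto)
  qed
  obtain y where y: "y \<in> N2s" "E s1 y" "E y d2"
    using core[OF t(1) dx t(6) t(2,3) s1N(1) s1(3) s1t s1tE s1d2 s1N(2)] by blast
  obtain y' where y': "y' \<in> N2s" "E s2 y'" "E y' d1"
    using core[OF t(1) dx(2,1) t(6)[symmetric] t(3,2) s2N(1) s2(3) s2t s2tE s2d1 s2N(2)] by blast
  have s12: "s1 \<noteq> s2" using s1 s2d1 by auto
  have ys2: "y \<noteq> s2" using ind y s1 s2 by auto
  have y's1: "y' \<noteq> s1" using ind y' s1 s2 sym by blast
  have yx: "y \<noteq> x" "\<not> E x y" using N2D[OF y(1)] by auto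
  have y'x: "y' \<noteq> x" "\<not> E x y'" using N2D[OF y'(1)] by auto
  have yy': "y \<noteq> y'"
  proof
    assume e: "y = y'"
    have "y \<noteq> s" using e y' sd1 by auto
    moreover have "y \<noteq> t" using y s1tE by auto
    ultimately show False
    proof (intro cyc7[of x d s t d1 y d2])
      show "distinct [x, d, s, t, d1, y, d2]" using \<open>y \<noteq> s\<close> \<open>y \<noteq> t\<close> dd dx s t sx tx st yx by auto
    qed (use e y y' dx s t sym in auto)
  qed
  show False
  proof (intro cyc6[of d1 s1 y d2 s2 y'])
    show "distinct [d1, s1, y, d2, s2, y']"
      using s12 ys2 y's1 yy' s1 s2 y y' dx s1x s2x yx y'x t(6) by auto
  qed (use s1 s2 y y' sym in auto)
qed

end


context G67 begin

abbreviation "H \<equiv> Hx V E x"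
abbreviation "Hs \<equiv> Hstarx V E x"
abbreviation "SS \<equiv> Sstar V E x"

lemma ext_char: assumes "W \<subseteq> V" "x \<in> W"
  shows "extendable W E x \<longleftrightarrow> \<not> (\<exists>S. S \<subseteq> {v. v \<in> W \<and> v \<noteq> x \<and> \<not> E x v \<and> (\<exists>u. u \<in> W \<and> E x u \<and> E u v)}
     \<and> independent E S \<and> {v. v \<in> W \<and> E x v} \<subseteq> {v. v \<in> W \<and> (v \<in> S \<or> (\<exists>s. s \<in> S \<and> s \<in> W \<and> E s v))})"
  unfolding extendable_def nbhd_x1[of E x W, OF irr assms(2)] nbhd_x2[of E x W, OF irr assms(2)] closed1_eq ..

lemma HV: "H \<subseteq> V" using Hx_mem by blast
lemma HsH: "Hs \<subseteq> H" using Hs_mem by blast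
lemma SS_N2: "SS \<subseteq> N2s" using Ss_mem by blast

lemma VA_not_adj: "a \<in> VA \<Longrightarrow> \<not> E a v \<or> v \<notin> N2s \<or> v \<in> VA" using VA_closed by blast

lemma xH: "x \<in> H"
proof -
  have "x \<notin> VA" using VA_sub x_notin_N2 by blast
  moreover have "\<not> E a x" if "a \<in> VA" for a using that VA_sub N2D sym by blast
  ultimately show ?thesis using Hx_mem xV by blast
qed

lemma xHs: "x \<in> Hs"
  using xH SS_N2 x_notin_N2 N2D sym Hs_mem by blast

lemma DH: "d \<in> D \<Longrightarrow> d \<in> H"
proof -
  assume d: "d \<in> D"
  hence "E x d" "\<forall>a\<in>VA. \<not> E a d" using D_mem by auto
  moreover have "d \<notin> VA" using \<open>E x d\<close> VA_sub N2D by blast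
  ultimately show "d \<in> H" using Hx_mem inV2 by blast
qed

lemma SS_pair: "t \<in> SS \<Longrightarrow> \<exists>d1 d2. d1 \<in> D \<and> d2 \<in> D \<and> d1 \<noteq> d2 \<and> E t d1 \<and> E t d2"
  using Ss_mem card_ge2[of "{w. E t w} \<inter> D"] by blast

lemma SS_H: "t \<in> SS \<Longrightarrow> t \<in> H"
proof -
  assume t: "t \<in> SS"
  hence tN: "t \<in> N2s" "t \<notin> VA" using Ss_mem by auto
  obtain d where "d \<in> D" "E t d" using SS_pair[OF t] by blast
  hence "t \<in> V" using inV1 by blast
  moreover have "\<forall>a\<in>VA. \<not> E a t" using tN VA_closed by blast
  ultimately show ?thesis using tN N2_mem Hx_mem by blast
qed

lemma main:
  assumes indS: "independent E SS"
  shows "extendable H E x \<longleftrightarrow> extendable Hs E x"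
proof -
  have HsV: "Hs \<subseteq> V" using HsH HV by blast
  have A: "\<not> extendable H E x" if "\<not> extendable Hs E x"
  proof -
    from that obtain S where S: "S \<subseteq> {v. v \<in> Hs \<and> v \<noteq> x \<and> \<not> E x v \<and> (\<exists>u. u \<in> Hs \<and> E x u \<and> E u v)}"
      "independent E S" "{v. v \<in> Hs \<and> E x v} \<subseteq> {v. v \<in> Hs \<and> (v \<in> S \<or> (\<exists>s. s \<in> S \<and> s \<in> Hs \<and> E s v))}"
      unfolding ext_char[OF HsV xHs] by blast
    let ?S = "S \<union> SS"
    have "?S \<subseteq> {v. v \<in> H \<and> v \<noteq> x \<and> \<not> E x v \<and> (\<exists>u. u \<in> H \<and> E x u \<and> E u v)}"
    proof
      fix v assume "v \<in> ?S"
      thus "v \<in> {v. v \<in> H \<and> v \<noteq> x \<and> \<not> E x v \<and> (\<exists>u. u \<in> H \<and> E x u \<and> E u v)}"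
      proof
        assume "v \<in> S" thus ?thesis using S(1) HsH by blast
      next
        assume v: "v \<in> SS"
        obtain d where "d \<in> D" "E v d" using SS_pair[OF v] by blast
        moreover have "v \<noteq> x" "\<not> E x v" using v SS_N2 N2D by auto
        ultimately show ?thesis using SS_H[OF v] DH D_mem sym by blast
      qed
    qed
    moreover have "independent E ?S"
      using S(2) indS Hs_mem S(1) sym unfolding independent_def by blast
    moreover have "{v. v \<in> H \<and> E x v} \<subseteq> {v. v \<in> H \<and> (v \<in> ?S \<or> (\<exists>s. s \<in> ?S \<and> s \<in> H \<and> E s v))}"
    proof
      fix v assume v: "v \<in> {v. v \<in> H \<and> E x v}"
      show "v \<in> {v. v \<in> H \<and> (v \<in> ?S \<or> (\<exists>s. s \<in> ?S \<and> s \<in> H \<and> E s v))}"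
      proof (cases "\<exists>t\<in>SS. E t v")
        case True thus ?thesis using v SS_H by blast
      next
        case False
        have "v \<notin> SS" using v SS_N2 N2D by blast
        hence "v \<in> Hs" using False v Hs_mem by blast
        thus ?thesis using S(3) v HsH by blast
      qed
    qed
    ultimately show ?thesis unfolding ext_char[OF HV xH] by blast
  qed
  have B: "\<not> extendable Hs E x" if "\<not> extendable H E x"
  proof -
    from that obtain S where S: "S \<subseteq> {v. v \<in> H \<and> v \<noteq> x \<and> \<not> E x v \<and> (\<exists>u. u \<in> H \<and> E x u \<and> E u v)}"
      "independent E S" "{v. v \<in> H \<and> E x v} \<subseteq> {v. v \<in> H \<and> (v \<in> S \<or> (\<exists>s. s \<in> S \<and> s \<in> H \<and> E s v))}"
      unfolding ext_char[OF HV xH] by blast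
    have SN2: "S \<subseteq> N2s" using S(1) N2_mem by blast
    have cover: "\<exists>s'\<in>S. s' \<in> H \<and> E s' d'" if "d' \<in> D" for d'
    proof -
      have "d' \<in> {v. v \<in> H \<and> E x v}" using DH that D_mem by blast
      hence "d' \<in> {v. v \<in> H \<and> (v \<in> S \<or> (\<exists>s. s \<in> S \<and> s \<in> H \<and> E s v))}" using S(3) by blast
      moreover have "d' \<notin> S" using S(1) that D_mem by blast
      ultimately show ?thesis by blast
    qed
    let ?S = "{s \<in> S. s \<in> Hs \<and> (\<exists>u. u \<in> Hs \<and> E x u \<and> E u s)}"
    have "?S \<subseteq> {v. v \<in> Hs \<and> v \<noteq> x \<and> \<not> E x v \<and> (\<exists>u. u \<in> Hs \<and> E x u \<and> E u v)}"
      using S(1) by blast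
    moreover have "independent E ?S" using S(2) unfolding independent_def by blast
    moreover have "{v. v \<in> Hs \<and> E x v} \<subseteq> {v. v \<in> Hs \<and> (v \<in> ?S \<or> (\<exists>s. s \<in> ?S \<and> s \<in> Hs \<and> E s v))}"
    proof
      fix v assume v: "v \<in> {v. v \<in> Hs \<and> E x v}"
      hence vH: "v \<in> H" using HsH by blast
      have "v \<notin> S" using S(1) v by blast
      then obtain s where s: "s \<in> S" "s \<in> H" "E s v" using S(3) v vH by blast
      have vns: "\<forall>t\<in>SS. \<not> E t v" using v Hs_mem by blast
      have "s \<notin> SS" using s vns by blast
      moreover have "\<not> E t s" if t: "t \<in> SS" for t
      proof
        assume ts: "E t s"
        obtain d1 d2 where dd: "d1 \<in> D" "d2 \<in> D" "d1 \<noteq> d2" "E t d1" "E t d2" using SS_pair[OF t] by blast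
        show False
          using MC[OF SN2 S(2) cover s(1) _ s(3), of t d1 d2] v t SS_N2 dd vns sym ts by blast
      qed
      ultimately have "s \<in> Hs" using s Hs_mem by blast
      have vv: "v \<in> Hs" "E x v" using v by auto
      have "E v s" using sym s(3) .
      have "s \<in> ?S" using s(1) \<open>s \<in> Hs\<close> vv \<open>E v s\<close> by blast
      thus "v \<in> {v. v \<in> Hs \<and> (v \<in> ?S \<or> (\<exists>s. s \<in> ?S \<and> s \<in> Hs \<and> E s v))}"
        using vv s(3) \<open>s \<in> Hs\<close> by blast
    qed
    ultimately show ?thesis unfolding ext_char[OF HsV xHs] by blast
  qed
  show ?thesis using A B by blast
qed

end

theorem lemma2p14:
  fixes V :: "'a set" and E :: "'a \<Rightarrow> 'a \<Rightarrow> bool" and x :: 'a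
  assumes "no_C6_C7 V E"
    and "x \<in> V"
    and "independent E (Sstar V E x)"
  shows "extendable (Hx V E x) E x \<longleftrightarrow> extendable (Hstarx V E x) E x"
proof -
  interpret G67 V E x using assms unfolding no_C6_C7_def by unfold_locales auto
  show ?thesis using main assms(3) by blast
qed

end
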